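(* Let $(\varepsilon_i)_{i\ge4}$ and $(\varepsilon'_i)_{i\ge l}$ be elements of $\mathcal{D}^\infty$ such that $\sum_{i=4}^\infty\varepsilon_i\alpha^i=\sum_{i=l}^\infty\varepsilon'_i\alpha^i$, where $l<4$ and $\varepsilon'_l=1$. Then $\varepsilon'_l\alpha^l+\varepsilon'_{l+1}\alpha^{l+1}+\cdots+\varepsilon'_3\alpha^3$ belongs to $S$. In particular $l\ge-3$, and $\varepsilon'_l\alpha^l+\cdots+\varepsilon'_3\alpha^3=\alpha^{-3}+\alpha^{-2}+1+\alpha^3$ if $l=-3$; $\varepsilon'_l\alpha^l+\cdots+\varepsilon'_3\alpha^3=\alpha^{-2}+\alpha^{-1}+\alpha$ if $l=-2$; $\varepsilon'_l\alpha^l+\cdots+\varepsilon'_3\alpha^3=\alpha^{-1}+1+\alpha^2$ if $l=-1$.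
   Context: Let $P(x)=x^4-x^3-x^2-x-1$. Its roots are $\beta=\beta_1\approx 1.9275$, a real root $\beta_2\approx-0.7748$, and a pair of complex conjugate roots $\beta_3\approx-0.0763+0.8147i$ and $\overline{\beta_3}$. For $i\in\mathbb{Z}$ put $\alpha^i=(\beta_2^i,\beta_3^i)\in\mathbb{R}\times\mathbb{C}$, with $\alpha^0=1=(1,1)$; arithmetic is componentwise and an integer $n$ is identified with $(n,n)$. $\mathcal{D}^\infty$ is the set of sequences $(\varepsilon_i)_{i\ge l}$, $l\in\mathbb{Z}$, with $\varepsilon_i\in\{0,1\}$ and containing no four consecutive $1$'s. $S$ is the set $\{\pm\sum_{i=0}^3c_i\alpha^i : c_i\in\{0,1\},\ c_0c_1c_2c_3\neq1111\}\cup\{\pm(\alpha^{-1}+1+\alpha^2),\pm(\alpha^{-2}+\alpha^{-1}+\alpha),\pm(\alpha^{-3}+\alpha^{-2}+1+\alpha^3)\}$. *)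

theory Defs
  imports Complex_Main
begin

definition beta2 :: real where
  "beta2 = (THE x::real. x^4 - x^3 - x^2 - x - 1 = 0 \<and> x < 0)"

definition beta3 :: complex where
  "beta3 = (THE z::complex. z^4 - z^3 - z^2 - z - 1 = 0 \<and> Im z > 0)"

text \<open>alpha^i = (beta2^i, beta3^i) in R x C; elements of R x C are represented as pairs.\<close>
definition alpha_pow :: "int \<Rightarrow> real \<times> complex" where
  "alpha_pow i = (beta2 powi i, beta3 powi i)"

definition Dinf :: "int \<Rightarrow> (int \<Rightarrow> int) \<Rightarrow> bool" where
  "Dinf l eps \<longleftrightarrow> (\<forall>i\<ge>l. eps i \<in> {0,1}) \<and>
     (\<forall>i\<ge>l. \<not> (eps i = 1 \<and> eps (i+1) = 1 \<and> eps (i+2) = 1 \<and> eps (i+3) = 1))"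

definition series_val :: "int \<Rightarrow> (int \<Rightarrow> int) \<Rightarrow> real \<times> complex" where
  "series_val l eps =
     ((\<Sum>n. of_int (eps (l + int n)) * beta2 powi (l + int n)),
      (\<Sum>n. of_int (eps (l + int n)) * beta3 powi (l + int n)))"

definition partial_val :: "int \<Rightarrow> int \<Rightarrow> (int \<Rightarrow> int) \<Rightarrow> real \<times> complex" where
  "partial_val a b eps =
     ((\<Sum>i=a..b. of_int (eps i) * beta2 powi i),
      (\<Sum>i=a..b. of_int (eps i) * beta3 powi i))"

definition aset :: "int set \<Rightarrow> real \<times> complex" where
  "aset A = ((\<Sum>i\<in>A. beta2 powi i), (\<Sum>i\<in>A. beta3 powi i))"

definition pneg :: "real \<times> complex \<Rightarrow> real \<times> complex" where
  "pneg p = (- fst p, - snd p)"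

definition S_set :: "(real \<times> complex) set" where
  "S_set = (let T = {aset A | A. A \<subseteq> {0..3} \<and> A \<noteq> {0..3}}
                    \<union> {aset {-1,0,2}, aset {-2,-1,1}, aset {-3,-2,0,3}}
            in T \<union> pneg ` T)"

end

theory Submission
  imports Defs
begin


lemma factor_id:
  fixes b1 b2 X :: "'a::field"
  assumes r1: "b1^4 - b1^3 - b1^2 - b1 - 1 = 0" and r2: "b2^4 - b2^3 - b2^2 - b2 - 1 = 0"
    and ne: "b1 \<noteq> b2"
  shows "X^4 - X^3 - X^2 - X - 1 = (X - b1) * (X - b2) *
     (X^2 + (b1 + b2 - 1) * X + (b1^2 - b1 - 1 + (b1 - 1) * b2 + b2^2))"
proof -
  define Q where "Q Y = Y^3 + (b1 - 1)*Y^2 + (b1^2 - b1 - 1)*Y + (b1^3 - b1^2 - b1 - 1)" for Y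
  have d1: "Y^4 - Y^3 - Y^2 - Y - 1 = (Y - b1) * Q Y + (b1^4 - b1^3 - b1^2 - b1 - 1)" for Y
    unfolding Q_def by algebra
  have "(b2 - b1) * Q b2 = 0" using d1[of b2] r1 r2 by simp
  hence q2: "Q b2 = 0" using ne by simp
  have d2: "Q Y = (Y - b2) * (Y^2 + (b1 + b2 - 1) * Y + (b1^2 - b1 - 1 + (b1 - 1) * b2 + b2^2)) + Q b2" for Y
    unfolding Q_def by algebra
  show ?thesis using d1[of X] d2[of X] q2 r1 by simp
qed

lemma root1: "\<exists>x::real. 1927561/10^6 \<le> x \<and> x \<le> 1927562/10^6 \<and> x^4 - x^3 - x^2 - x - 1 = 0"
  by (rule IVT'[of "\<lambda>x. x^4 - x^3 - x^2 - x - 1"]) (auto intro!: continuous_intros simp: power_divide)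

lemma root2: "\<exists>x::real. -774805/10^6 \<le> x \<and> x \<le> -774804/10^6 \<and> x^4 - x^3 - x^2 - x - 1 = 0"
  by (rule IVT2'[of "\<lambda>x. x^4 - x^3 - x^2 - x - 1"]) (auto intro!: continuous_intros simp: power_divide)

lemma prod_bounds:
  fixes x y :: real
  assumes "0 \<le> a" "a \<le> x" "x \<le> b" "0 \<le> c" "c \<le> y" "y \<le> d"
  shows "a*c \<le> x*y \<and> x*y \<le> b*d"
  using assms by (auto intro!: mult_mono)

definition B1 :: real where
  "B1 = (SOME x::real. 1927561/10^6 \<le> x \<and> x \<le> 1927562/10^6 \<and> x^4 - x^3 - x^2 - x - 1 = 0)"
definition Y2 :: real where
  "Y2 = (SOME x::real. -774805/10^6 \<le> x \<and> x \<le> -774804/10^6 \<and> x^4 - x^3 - x^2 - x - 1 = 0)"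

lemma B1: "1927561/10^6 \<le> B1" "B1 \<le> 1927562/10^6" "B1^4 - B1^3 - B1^2 - B1 - 1 = 0"
  using someI_ex[OF root1] unfolding B1_def by auto
lemma Y2: "-774805/10^6 \<le> Y2" "Y2 \<le> -774804/10^6" "Y2^4 - Y2^3 - Y2^2 - Y2 - 1 = 0"
  using someI_ex[OF root2] unfolding Y2_def by auto

definition qq :: real where "qq = B1^2 - B1 - 1 + (B1 - 1) * Y2 + Y2^2"
definition uu :: real where "uu = (B1 + Y2 - 1) / 2"
definition ww :: real where "ww = sqrt (qq - uu^2)"

lemma factor_real: "x^4 - x^3 - x^2 - x - 1 = (x - B1) * (x - Y2) * (x^2 + 2*uu*x + qq)"
  using factor_id[OF B1(3) Y2(3), of x] B1(1) Y2(2) unfolding uu_def qq_def by simp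

lemma factor_cplx: "(z::complex)^4 - z^3 - z^2 - z - 1 = (z - of_real B1) * (z - of_real Y2) * (z^2 + 2*of_real uu*z + of_real qq)"
proof -
  have "of_real B1 \<noteq> (of_real Y2 :: complex)" using B1(1) Y2(2) by simp
  moreover have "(of_real B1::complex)^4 - (of_real B1)^3 - (of_real B1)^2 - of_real B1 - 1 = 0"
    using arg_cong[OF B1(3), of "of_real :: real \<Rightarrow> complex"] by simp
  moreover have "(of_real Y2::complex)^4 - (of_real Y2)^3 - (of_real Y2)^2 - of_real Y2 - 1 = 0"
    using arg_cong[OF Y2(3), of "of_real :: real \<Rightarrow> complex"] by simp
  ultimately show ?thesis using factor_id[of "of_real B1" "of_real Y2" z] unfolding uu_def qq_def
    by simp
qed

lemma uu_bounds: "76375/10^6 \<le> uu" "uu \<le> 76382/10^6"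
  using B1 Y2 unfolding uu_def by simp_all

lemma qq_bounds: "66955/10^5 \<le> qq" "qq \<le> 66960/10^5"
proof -
  define m where "m = - Y2"
  have m: "774804/10^6 \<le> m" "m \<le> 774805/10^6" using Y2 unfolding m_def by simp_all
  have q: "qq = B1*B1 - B1 - 1 - B1*m + m + m*m" unfolding qq_def m_def by (simp add: algebra_simps power2_eq_square)
  have b: "1927561/10^6 * (1927561/10^6) \<le> B1*B1 \<and> B1*B1 \<le> 1927562/10^6 * (1927562/10^6)"
    by (rule prod_bounds) (use B1 in simp_all)
  have bm: "1927561/10^6 * (774804/10^6) \<le> B1*m \<and> B1*m \<le> 1927562/10^6 * (774805/10^6)"
    by (rule prod_bounds) (use B1 m in simp_all)
  have mm: "774804/10^6 * (774804/10^6) \<le> m*m \<and> m*m \<le> 774805/10^6 * (774805/10^6)"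
    by (rule prod_bounds) (use m in simp_all)
  show "66955/10^5 \<le> qq" using b bm mm B1 m unfolding q by simp
  show "qq \<le> 66960/10^5" using b bm mm B1 m unfolding q by simp
qed

lemma ww_bounds: "81466/10^5 \<le> ww" "ww \<le> 81475/10^5" "ww^2 = qq - uu^2"
proof -
  have uu2: "76375/10^6 * (76375/10^6) \<le> uu*uu \<and> uu*uu \<le> 76382/10^6 * (76382/10^6)"
    by (rule prod_bounds) (use uu_bounds in simp_all)
  have d: "(81466/10^5)^2 \<le> qq - uu^2" "qq - uu^2 \<le> (81475/10^5)^2"
    using uu2 qq_bounds by (simp_all add: power2_eq_square)
  show "81466/10^5 \<le> ww" unfolding ww_def by (rule real_le_rsqrt) (use d in simp)
  show "ww \<le> 81475/10^5" unfolding ww_def by (rule real_le_lsqrt) (use d in simp_all)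
  show "ww^2 = qq - uu^2" unfolding ww_def using d(1) by (simp add: power2_eq_square)
qed

definition ZZ :: complex where "ZZ = Complex (- uu) ww"

lemma ZZ_quad: "ZZ^2 + 2*of_real uu*ZZ + of_real qq = 0"
  using ww_bounds(3) by (simp add: ZZ_def complex_eq_iff power2_eq_square algebra_simps)

lemma quad_factor: "(y::complex)^2 + 2*of_real uu*y + of_real qq = (y - ZZ) * (y - cnj ZZ)"
proof -
  have "of_real qq = (of_real (uu^2 + ww^2) :: complex)" using ww_bounds(3) by simp
  thus ?thesis by (simp add: ZZ_def complex_eq_iff power2_eq_square algebra_simps)
qed

lemma beta2_eq: "beta2 = Y2"
  unfolding beta2_def
proof (rule the_equality)
  show "Y2^4 - Y2^3 - Y2^2 - Y2 - 1 = 0 \<and> Y2 < 0" using Y2 by simp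
next
  fix x :: real assume a: "x^4 - x^3 - x^2 - x - 1 = 0 \<and> x < 0"
  have "x^2 + 2*uu*x + qq = (x + uu)^2 + ww^2" using ww_bounds(3) by (simp add: power2_eq_square algebra_simps)
  moreover have "ww^2 > 0" using ww_bounds(1) by simp
  ultimately have "x^2 + 2*uu*x + qq > 0" by (smt (verit) zero_le_power2)
  moreover have "x - B1 \<noteq> 0" using a B1(1) by simp
  ultimately show "x = Y2" using a factor_real[of x] by simp
qed

lemma beta3_eq: "beta3 = ZZ"
  unfolding beta3_def
proof (rule the_equality)
  have "ZZ^4 - ZZ^3 - ZZ^2 - ZZ - 1 = 0" using factor_cplx[of ZZ] ZZ_quad by simp
  moreover have "Im ZZ > 0" using ww_bounds(1) by (simp add: ZZ_def)
  ultimately show "ZZ^4 - ZZ^3 - ZZ^2 - ZZ - 1 = 0 \<and> Im ZZ > 0" by simp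
next
  fix y :: complex assume a: "y^4 - y^3 - y^2 - y - 1 = 0 \<and> Im y > 0"
  have "y - of_real B1 \<noteq> 0" "y - of_real Y2 \<noteq> 0" using a by (auto simp: complex_eq_iff)
  hence "(y - ZZ) * (y - cnj ZZ) = 0" using a factor_cplx[of y] quad_factor[of y] by simp
  moreover have "y \<noteq> cnj ZZ" using a ww_bounds(1) by (auto simp: ZZ_def complex_eq_iff)
  ultimately show "y = ZZ" by simp
qed

lemma ZZ_norm: "norm ZZ \<le> 82/100"
proof -
  have "norm ZZ = sqrt qq" using ww_bounds(3) by (simp add: ZZ_def norm_complex_def)
  also have "\<dots> \<le> 82/100" by (rule real_le_lsqrt) (use qq_bounds in \<open>simp_all add: power_divide\<close>)
  finally show ?thesis .
qed

lemma B1_approx: "\<bar>B1*10000 - 19276\<bar> \<le> 2" "\<bar>B1^2*10000 - 37155\<bar> \<le> 2" "\<bar>B1^3*10000 - 71618\<bar> \<le> 2"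
proof -
  have b2: "1927561/10^6 * (1927561/10^6) \<le> B1*B1 \<and> B1*B1 \<le> 1927562/10^6 * (1927562/10^6)"
    by (rule prod_bounds) (use B1 in simp_all)
  have b3: "1927561/10^6 * (1927561/10^6) * (1927561/10^6) \<le> B1*B1*B1 \<and> B1*B1*B1 \<le> 1927562/10^6 * (1927562/10^6) * (1927562/10^6)"
    by (rule prod_bounds) (use B1 b2 in simp_all)
  show "\<bar>B1*10000 - 19276\<bar> \<le> 2" using B1 by simp
  show "\<bar>B1^2*10000 - 37155\<bar> \<le> 2" using b2 by (simp add: power2_eq_square)
  show "\<bar>B1^3*10000 - 71618\<bar> \<le> 2" using b3 by (simp add: power3_eq_cube)
qed

lemma Y2_approx: "\<bar>Y2*10000 - (-7748)\<bar> \<le> 2" "\<bar>Y2^2*10000 - 6003\<bar> \<le> 2" "\<bar>Y2^3*10000 - (-4651)\<bar> \<le> 2"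
proof -
  define m where "m = - Y2"
  have m: "774804/10^6 \<le> m" "m \<le> 774805/10^6" using Y2 unfolding m_def by simp_all
  have b2: "774804/10^6 * (774804/10^6) \<le> m*m \<and> m*m \<le> 774805/10^6 * (774805/10^6)"
    by (rule prod_bounds) (use m in simp_all)
  have b3: "774804/10^6 * (774804/10^6) * (774804/10^6) \<le> m*m*m \<and> m*m*m \<le> 774805/10^6 * (774805/10^6) * (774805/10^6)"
    by (rule prod_bounds) (use m b2 in simp_all)
  have e: "Y2 = - m" unfolding m_def by simp
  show "\<bar>Y2*10000 - (-7748)\<bar> \<le> 2" using m unfolding e by simp
  show "\<bar>Y2^2*10000 - 6003\<bar> \<le> 2" using b2 unfolding e by (simp add: power2_eq_square)
  show "\<bar>Y2^3*10000 - (-4651)\<bar> \<le> 2" using b3 unfolding e by (simp add: power3_eq_cube)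
qed

lemma ZZ_pow: "Re ZZ = - uu" "Im ZZ = ww"
  "Re (ZZ^2) = 2*uu*uu - qq" "Im (ZZ^2) = - 2*uu*ww"
  "Re (ZZ^3) = -4*uu*uu*uu + 3*uu*qq" "Im (ZZ^3) = ww*(4*uu*uu - qq)"
proof -
  have qe: "qq = uu*uu + ww*ww" using ww_bounds(3) by (simp add: power2_eq_square)
  show "Re ZZ = - uu" "Im ZZ = ww"
  "Re (ZZ^2) = 2*uu*uu - qq" "Im (ZZ^2) = - 2*uu*ww"
  "Re (ZZ^3) = -4*uu*uu*uu + 3*uu*qq" "Im (ZZ^3) = ww*(4*uu*uu - qq)"
    by (simp_all add: qe ZZ_def power2_eq_square power3_eq_cube algebra_simps)
qed

lemma ZZ_approx: "\<bar>Re ZZ*10000 - (-764)\<bar> \<le> 2" "\<bar>Re (ZZ^2)*10000 - (-6579)\<bar> \<le> 2" "\<bar>Re (ZZ^3)*10000 - 1516\<bar> \<le> 2"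
  "\<bar>Im ZZ*10000 - 8147\<bar> \<le> 2" "\<bar>Im (ZZ^2)*10000 - (-1245)\<bar> \<le> 2" "\<bar>Im (ZZ^3)*10000 - (-5265)\<bar> \<le> 2"
proof -
  note u = uu_bounds and q = qq_bounds and w = ww_bounds
  have u2: "76375/10^6 * (76375/10^6) \<le> uu*uu \<and> uu*uu \<le> 76382/10^6 * (76382/10^6)"
    by (rule prod_bounds) (use u in simp_all)
  have u3: "76375/10^6 * (76375/10^6) * (76375/10^6) \<le> uu*uu*uu \<and> uu*uu*uu \<le> 76382/10^6 * (76382/10^6) * (76382/10^6)"
    by (rule prod_bounds) (use u u2 in simp_all)
  have uq: "76375/10^6 * (66955/10^5) \<le> uu*qq \<and> uu*qq \<le> 76382/10^6 * (66960/10^5)"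
    by (rule prod_bounds) (use u q in simp_all)
  have uw: "76375/10^6 * (81466/10^5) \<le> uu*ww \<and> uu*ww \<le> 76382/10^6 * (81475/10^5)"
    by (rule prod_bounds) (use u w in simp_all)
  have wu2: "81466/10^5 * (76375/10^6 * (76375/10^6)) \<le> ww*(uu*uu) \<and> ww*(uu*uu) \<le> 81475/10^5 * (76382/10^6 * (76382/10^6))"
    by (rule prod_bounds) (use w u2 in simp_all)
  have wq: "81466/10^5 * (66955/10^5) \<le> ww*qq \<and> ww*qq \<le> 81475/10^5 * (66960/10^5)"
    by (rule prod_bounds) (use w q in simp_all)
  show "\<bar>Re ZZ*10000 - (-764)\<bar> \<le> 2" using u by (simp add: ZZ_pow)
  show "\<bar>Re (ZZ^2)*10000 - (-6579)\<bar> \<le> 2" using u2 q by (simp add: ZZ_pow abs_le_iff; linarith)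
  show "\<bar>Re (ZZ^3)*10000 - 1516\<bar> \<le> 2" using u3 uq by (simp add: ZZ_pow)
  show "\<bar>Im ZZ*10000 - 8147\<bar> \<le> 2" using w by (simp add: ZZ_pow)
  show "\<bar>Im (ZZ^2)*10000 - (-1245)\<bar> \<le> 2" using uw by (simp add: ZZ_pow)
  have "ww*(4*uu*uu - qq) = 4*(ww*(uu*uu)) - ww*qq" by (simp add: algebra_simps)
  thus "\<bar>Im (ZZ^3)*10000 - (-5265)\<bar> \<le> 2" using wu2 wq by (simp add: ZZ_pow abs_le_iff; linarith)
qed



type_synonym vec = "int*int*int*int"
fun step :: "vec \<Rightarrow> int \<Rightarrow> vec" where
 "step (a,b,c,e) d = (b - a + d, c - a, e - a, a)"
fun ev :: "vec \<Rightarrow> 'a::comm_ring_1 \<Rightarrow> 'a" where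
 "ev (a,b,c,e) x = of_int a + of_int b * x + of_int c * x^2 + of_int e * x^3"
primrec rr :: "(nat \<Rightarrow> int) \<Rightarrow> nat \<Rightarrow> vec" where
  "rr c 0 = (0,0,0,0)"
| "rr c (Suc n) = step (rr c n) (c n)"

lemma ev_step:
  fixes x :: "'a::field"
  assumes "x^4 - x^3 - x^2 - x - 1 = 0"
  shows "x * ev (step v d) x = ev v x + of_int d * x"
proof -
  obtain a b c e where v: "v = (a,b,c,e)" by (cases v) auto
  have x4: "x^4 = x^3 + x^2 + x + 1" using assms by (simp add: algebra_simps)
  have "x * ev (step v d) x = of_int (b - a + d) * x + of_int (c - a) * x^2 + of_int (e - a) * x^3 + of_int a * x^4"
    by (simp add: v power2_eq_square power3_eq_cube power4_eq_xxxx algebra_simps)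
  also have "\<dots> = ev v x + of_int d * x"
    unfolding x4 by (simp add: v algebra_simps)
  finally show ?thesis .
qed

lemma ev_rr:
  fixes x :: "'a::field"
  assumes "x^4 - x^3 - x^2 - x - 1 = 0"
  shows "x^n * ev (rr c n) x = x * (\<Sum>j<n. of_int (c j) * x^j)"
proof (induction n)
  case 0 then show ?case by simp
next
  case (Suc n)
  have "x^Suc n * ev (rr c (Suc n)) x = x^n * (x * ev (step (rr c n) (c n)) x)" by (simp add: algebra_simps)
  also have "\<dots> = x^n * ev (rr c n) x + of_int (c n) * x^Suc n"
    using ev_step[OF assms] by (simp add: algebra_simps)
  also have "\<dots> = x * (\<Sum>j<Suc n. of_int (c j) * x^j)" using Suc by (simp add: algebra_simps)
  finally show ?case .
qed

lemma bound_contract: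
  fixes x :: "'a::{real_normed_field,banach}"
  assumes P: "x^4 - x^3 - x^2 - x - 1 = 0" and nx: "norm x < 1" and x0: "x \<noteq> 0"
    and s: "(\<lambda>j. of_int (c j) * x^j) sums 0" and c: "\<And>j. \<bar>c j\<bar> \<le> 1"
  shows "norm (ev (rr c n) x) \<le> norm x / (1 - norm x)"
proof -
  define f where "f j = of_int (c j) * x^j" for j
  have s': "f sums 0" using s unfolding f_def .
  have sh: "(\<lambda>j. f (j + n)) sums (0 - (\<Sum>j<n. f j))"
    by (rule sums_iff_shift'[THEN iffD2, OF s'])
  have fb: "norm (f (j+n)) \<le> norm x^n * norm x^j" for j
  proof -
    have "norm (f (j+n)) = \<bar>of_int (c (j+n))\<bar> * norm x^(j+n)" by (simp add: f_def norm_mult norm_power)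
    also have "\<dots> \<le> 1 * norm x^(j+n)" using c[of "j+n"] by (intro mult_right_mono) auto
    finally show ?thesis by (simp add: power_add mult.commute)
  qed
  have g: "(\<lambda>j. norm x^n * norm x^j) sums (norm x^n * (1 / (1 - norm x)))"
    by (intro sums_mult geometric_sums) (use nx in simp)
  have "norm (\<Sum>j<n. f j) = norm (suminf (\<lambda>j. f (j+n)))" using sums_unique[OF sh] by (metis diff_0 norm_minus_cancel)
  also have "\<dots> \<le> (\<Sum>j. norm x^n * norm x^j)"
    by (rule norm_suminf_le[OF fb]) (use g sums_summable in blast)
  also have "\<dots> = norm x^n / (1 - norm x)" using sums_unique[OF g] by simp
  finally have A: "norm (\<Sum>j<n. f j) \<le> norm x^n / (1 - norm x)" .
  have "norm x^n * norm (ev (rr c n) x) = norm x * norm (\<Sum>j<n. f j)"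
    using arg_cong[OF ev_rr[OF P, of n c], of norm] unfolding f_def by (simp add: norm_mult norm_power)
  also have "\<dots> \<le> norm x * (norm x^n / (1 - norm x))" using A by (intro mult_left_mono) auto
  finally have "norm x^n * norm (ev (rr c n) x) \<le> norm x^n * (norm x / (1 - norm x))" by (simp add: mult.commute)
  moreover have "norm x^n > 0" using x0 by simp
  ultimately show ?thesis using mult_le_cancel_left_pos by blast
qed

lemma bound_expand:
  fixes x :: real
  assumes P: "x^4 - x^3 - x^2 - x - 1 = 0" and x1: "x > 1"
    and c: "\<And>j. \<bar>c j\<bar> \<le> 1"
  shows "\<bar>ev (rr c n) x\<bar> \<le> x / (x - 1)"
proof -
  have "\<bar>\<Sum>j<n. of_int (c j) * x^j\<bar> \<le> (\<Sum>j<n. x^j)"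
  proof -
    have "\<bar>\<Sum>j<n. of_int (c j) * x^j\<bar> \<le> (\<Sum>j<n. \<bar>of_int (c j) * x^j\<bar>)" by (rule sum_abs)
    also have "\<dots> \<le> (\<Sum>j<n. x^j)"
    proof (rule sum_mono)
      fix j show "\<bar>of_int (c j) * x^j\<bar> \<le> x^j"
        using c[of j] x1 by (simp add: abs_mult mult_le_cancel_right1)
    qed
    finally show ?thesis .
  qed
  also have "(\<Sum>j<n. x^j) = (x^n - 1) / (x - 1)" using x1 by (simp add: sum_gp_strict field_simps)
  also have "\<dots> \<le> x^n / (x - 1)" using x1 by (simp add: divide_right_mono)
  finally have A: "\<bar>\<Sum>j<n. of_int (c j) * x^j\<bar> \<le> x^n / (x - 1)" .
  have "x^n * \<bar>ev (rr c n) x\<bar> = x * \<bar>\<Sum>j<n. of_int (c j) * x^j\<bar>"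
    using arg_cong[OF ev_rr[OF P, of n c], of abs] x1 by (simp add: abs_mult)
  also have "\<dots> \<le> x * (x^n / (x - 1))" using A x1 by (intro mult_left_mono) auto
  finally have "x^n * \<bar>ev (rr c n) x\<bar> \<le> x^n * (x / (x - 1))" by (simp add: mult.commute)
  moreover have "x^n > 0" using x1 by simp
  ultimately show ?thesis using mult_le_cancel_left_pos by blast
qed

lemma powi_shift:
  fixes x :: "'a::field"
  assumes "x \<noteq> 0"
  shows "x powi (l + int n) = x powi l * x^n"
  using assms by (simp add: power_int_add)

lemma summable_digits:
  fixes x :: "'a::{real_normed_field,banach}"
  assumes nx: "norm x < 1" and c: "\<And>n. \<bar>c n\<bar> \<le> 1"
  shows "summable (\<lambda>n. of_int (c n) * x^n)"
proof (rule summable_comparison_test)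
  show "\<exists>N. \<forall>n\<ge>N. norm (of_int (c n) * x^n) \<le> norm x^n"
  proof (intro exI allI impI)
    fix n :: nat
    have "norm (of_int (c n) * x^n) = \<bar>of_int (c n)\<bar> * norm x^n" by (simp add: norm_mult norm_power)
    also have "\<dots> \<le> 1 * norm x^n" using c[of n] by (intro mult_right_mono) auto
    finally show "norm (of_int (c n) * x^n) \<le> norm x^n" by simp
  qed
  show "summable (\<lambda>n. norm x^n)" using nx by (intro summable_geometric) simp
qed

lemma series_zero:
  fixes x :: "'a::{real_normed_field,banach}" and eps eps' :: "int \<Rightarrow> int"
  assumes nx: "norm x < 1" and x0: "x \<noteq> 0" and l4: "l < 4"
    and ep: "\<And>n. \<bar>eps' (l + int n)\<bar> \<le> 1" and e: "\<And>n. \<bar>eps (4 + int n)\<bar> \<le> 1"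
    and eq: "(\<Sum>n. of_int (eps (4 + int n)) * x powi (4 + int n)) = (\<Sum>n. of_int (eps' (l + int n)) * x powi (l + int n))"
  shows "(\<lambda>j. of_int (eps' (l + int j) - (if 4 \<le> l + int j then eps (l + int j) else 0)) * x^j) sums 0"
proof -
  define a where "a n = of_int (eps' (l + int n)) * x^n" for n
  define b where "b n = of_int (eps (4 + int n)) * x^n" for n
  define g where "g j = of_int (if 4 \<le> l + int j then eps (l + int j) else 0) * x^j" for j
  define k where "k = nat (4 - l)"
  have k: "l + int k = 4" using l4 unfolding k_def by simp
  have sa: "summable a" unfolding a_def by (rule summable_digits[OF nx ep])
  have sb: "summable b" unfolding b_def by (rule summable_digits[OF nx e])
  have R: "(\<Sum>n. of_int (eps' (l + int n)) * x powi (l + int n)) = x powi l * suminf a"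
  proof -
    have "(\<lambda>n. of_int (eps' (l + int n)) * x powi (l + int n)) = (\<lambda>n. x powi l * a n)"
    proof
      fix n
      have "x powi (l + int n) = x powi l * x^n" by (rule powi_shift[OF x0])
      thus "of_int (eps' (l + int n)) * x powi (l + int n) = x powi l * a n" by (simp only: a_def algebra_simps)
    qed
    thus ?thesis using suminf_mult[OF sa] by simp
  qed
  have L: "(\<Sum>n. of_int (eps (4 + int n)) * x powi (4 + int n)) = x powi 4 * suminf b"
  proof -
    have "(\<lambda>n. of_int (eps (4 + int n)) * x powi (4 + int n)) = (\<lambda>n. x powi 4 * b n)"
    proof
      fix n
      have "x powi (4 + int n) = x powi 4 * x^n" by (rule powi_shift[OF x0])
      thus "of_int (eps (4 + int n)) * x powi (4 + int n) = x powi 4 * b n" by (simp only: b_def algebra_simps)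
    qed
    thus ?thesis using suminf_mult[OF sb] by simp
  qed
  have gs: "g sums (x^k * suminf b)"
  proof -
    have "(\<lambda>j. g (j + k)) = (\<lambda>j. x^k * b j)"
    proof
      fix j
      have e1: "l + int (j + k) = 4 + int j" using k by simp
      have "g (j + k) = of_int (eps (4 + int j)) * x^(j+k)" unfolding g_def e1 by simp
      thus "g (j + k) = x^k * b j" unfolding b_def by (simp add: power_add algebra_simps)
    qed
    moreover have "(\<lambda>j. x^k * b j) sums (x^k * suminf b)" by (intro sums_mult summable_sums sb)
    moreover have "(\<Sum>j<k. g j) = 0"
    proof (rule sum.neutral, rule ballI)
      fix j assume "j \<in> {..<k}"
      hence "\<not> 4 \<le> l + int j" using k by simp
      thus "g j = 0" unfolding g_def by simp
    qed
    ultimately have "(\<lambda>j. g (j + k)) sums (x^k * suminf b - (\<Sum>j<k. g j))" by simp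
    thus ?thesis by (rule sums_iff_shift'[THEN iffD1])
  qed
  have cs: "(\<lambda>j. a j - g j) sums (suminf a - x^k * suminf b)"
    by (intro sums_diff summable_sums sa gs)
  have "x powi l * (suminf a - x^k * suminf b) = x powi l * suminf a - (x powi l * x^k) * suminf b"
    by (simp add: algebra_simps)
  also have "x powi l * x^k = x powi 4" using powi_shift[OF x0, of l k] k by simp
  finally have "x powi l * (suminf a - x^k * suminf b) = 0" using eq L R by simp
  moreover have "x powi l \<noteq> 0" using x0 by simp
  ultimately have z: "suminf a - x^k * suminf b = 0" using x0 by simp
  have "(\<lambda>j. a j - g j) = (\<lambda>j. of_int (eps' (l + int j) - (if 4 \<le> l + int j then eps (l + int j) else 0)) * x^j)"
    by (rule ext) (simp add: a_def g_def algebra_simps)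
  with cs z show ?thesis by simp
qed



fun inB :: "vec \<Rightarrow> bool" where
 "inB (a,b,c,e) = (let s = 2*(\<bar>b\<bar>+\<bar>c\<bar>+\<bar>e\<bar>) in
    \<bar>a*10000 + b*19276 + c*37155 + e*71618\<bar> \<le> 21000 + s \<and>
    \<bar>a*10000 + b*(-7748) + c*6003 + e*(-4651)\<bar> \<le> 35000 + s \<and>
    \<bar>a*10000 + b*(-764) + c*(-6579) + e*1516\<bar> \<le> 46000 + s \<and>
    \<bar>a*0 + b*8147 + c*(-1245) + e*(-5265)\<bar> \<le> 46000 + s)"
fun key :: "vec \<Rightarrow> int" where "key (a,b,c,e) = ((a*16+b)*16+c)*16+e"
datatype tr = Lf | Nd tr int vec nat tr
fun lookup :: "vec \<Rightarrow> tr \<Rightarrow> nat option" where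
 "lookup v Lf = None"
| "lookup v (Nd l k w h r) = (if key v < k then lookup v l else if k < key v then lookup v r else if v = w then Some h else None)"
fun entries :: "tr \<Rightarrow> (vec*nat) list" where
 "entries Lf = []" | "entries (Nd l k w h r) = entries l @ [(w,h)] @ entries r"
definition T :: tr where "T = (Nd (Nd (Nd (Nd (Nd (Nd (Nd (Nd Lf (-21502) (-5,-4,0,2) 1 Lf) (-17422) (-4,-4,-1,2) 1 (Nd Lf (-17391) (-4,-4,1,1) 1 Lf)) (-17166) (-4,-3,-1,2) 1 (Nd (Nd Lf (-17135) (-4,-3,1,1) 1 Lf) (-16895) (-4,-2,0,1) 1 Lf)) (-13520) (-3,-5,3,0) 1 (Nd (Nd (Nd Lf (-13357) (-3,-4,-3,3) 1 Lf) (-13326) (-3,-4,-1,2) 3 Lf) (-13295) (-3,-4,1,1) 2 (Nd (Nd Lf (-13086) (-3,-3,-2,2) 1 Lf) (-13070) (-3,-3,-1,2) 3 Lf))) (-13055) (-3,-3,0,1) 3 (Nd (Nd (Nd (Nd Lf (-13024) (-3,-3,2,0) 1 Lf) (-12799) (-3,-2,0,1) 3 (Nd Lf (-12768) (-3,-2,2,0) 1 Lf)) (-12559) (-3,-1,-1,1) 3 (Nd (Nd Lf (-12528) (-3,-1,1,0) 2 Lf) (-12272) (-3,0,1,0) 2 Lf)) (-12001) (-3,1,2,-1) 1 (Nd (Nd (Nd Lf (-9261) (-2,-4,-3,3) 1 Lf) (-9230) (-2,-4,-1,2) 2 Lf) (-9199) (-2,-4,1,1) 4 (Nd (Nd Lf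 (-9168) (-2,-4,3,0) 1 Lf) (-9021) (-2,-3,-4,3) 1 Lf)))) (-8990) (-2,-3,-2,2) 5 (Nd (Nd (Nd (Nd (Nd Lf (-8959) (-2,-3,0,1) 7 Lf) (-8928) (-2,-3,2,0) 3 (Nd Lf (-8897) (-2,-3,4,-1) 1 Lf)) (-8734) (-2,-2,-2,2) 5 (Nd (Nd Lf (-8703) (-2,-2,0,1) 7 Lf) (-8672) (-2,-2,2,0) 3 Lf)) (-8657) (-2,-2,3,-1) 1 (Nd (Nd (Nd Lf (-8463) (-2,-1,-1,1) 7 Lf) (-8432) (-2,-1,1,0) 8 Lf) (-8401) (-2,-1,3,-1) 1 (Nd (Nd Lf (-8207) (-2,0,-1,1) 6 Lf) (-8192) (-2,0,0,0) 10 Lf))) (-8176) (-2,0,1,0) 8 (Nd (Nd (Nd (Nd Lf (-8161) (-2,0,2,-1) 4 Lf) (-8145) (-2,0,3,-1) 1 (Nd Lf (-7936) (-2,1,0,0) 6 Lf)) (-7905) (-2,1,2,-1) 4 (Nd (Nd Lf (-7665) (-2,2,1,-1) 4 Lf) (-7634) (-2,2,3,-2) 1 Lf)) (-7409) (-2,3,1,-1) 2 (Nd (Nd (Nd Lf (-7378) (-2,3,3,-2) 1 Lf) (-7138) (-2,4,2,-2) 2 Lf) (-5165) (-1,-4,-3,3) 1 (Nd (Nd Lf (-5150) (-1,-4,-2,2) 2 Lf) (-5134) (-1,-4,-1,2) 2 Lf))))) (-5119) (-1,-4,0,1) 5 (Nd (Nd (Nd (Nd (Nd (Nd Lf (-5088)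 (-1,-4,2,0) 3 Lf) (-4925) (-1,-3,-4,3) 2 (Nd Lf (-4894) (-1,-3,-2,2) 7 Lf)) (-4863) (-1,-3,0,1) 0 (Nd (Nd Lf (-4832) (-1,-3,2,0) 5 Lf) (-4669) (-1,-2,-4,3) 2 Lf)) (-4654) (-1,-2,-3,2) 5 (Nd (Nd (Nd Lf (-4638) (-1,-2,-2,2) 9 Lf) (-4623) (-1,-2,-1,1) 0 Lf) (-4592) (-1,-2,1,0) 0 (Nd (Nd Lf (-4561) (-1,-2,3,-1) 4 Lf) (-4398) (-1,-1,-3,2) 5 Lf))) (-4367) (-1,-1,-1,1) 0 (Nd (Nd (Nd (Nd Lf (-4336) (-1,-1,1,0) 0 Lf) (-4305) (-1,-1,3,-1) 6 (Nd Lf (-4127) (-1,0,-2,1) 0 Lf)) (-4096) (-1,0,0,0) 0 (Nd (Nd Lf (-4065) (-1,0,2,-1) 0 Lf) (-4034) (-1,0,4,-2) 1 Lf)) (-3871) (-1,1,-2,1) 0 (Nd (Nd (Nd Lf (-3840) (-1,1,0,0) 0 Lf) (-3809) (-1,1,2,-1) 0 Lf) (-3778) (-1,1,4,-2) 1 (Nd (Nd Lf (-3600) (-1,2,-1,0) 7 Lf) (-3569) (-1,2,1,-1) 8 Lf)))) (-3538) (-1,2,3,-2) 5 (Nd (Nd (Nd (Nd (Nd Lf (-3313) (-1,3,1,-1) 4 Lf) (-3282) (-1,3,3,-2) 3 (Nd Lf (-3267) (-1,3,4,-3) 1 Lf)) (-3042) (-1,4,2,-2) 2 (Nd (Nd Lf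 (-3011) (-1,4,4,-3) 1 Lf) (-1085) (0,-4,-4,3) 1 Lf)) (-1054) (0,-4,-2,2) 2 (Nd (Nd (Nd Lf (-1023) (0,-4,0,1) 3 Lf) (-829) (0,-3,-4,3) 2 Lf) (-798) (0,-3,-2,2) 4 (Nd (Nd Lf (-767) (0,-3,0,1) 9 Lf) (-752) (0,-3,1,0) 7 Lf))) (-589) (0,-2,-5,3) 2 (Nd (Nd (Nd (Nd Lf (-558) (0,-2,-3,2) 6 Lf) (-527) (0,-2,-1,1) 0 Lf) (-496) (0,-2,1,0) 0 (Nd (Nd Lf (-302) (0,-1,-3,2) 6 Lf) (-271) (0,-1,-1,1) 0 Lf)) (-256) (0,-1,0,0) 0 (Nd (Nd (Nd Lf (-240) (0,-1,1,0) 0 Lf) (-225) (0,-1,2,-1) 0 Lf) (-209) (0,-1,3,-1) 8 (Nd (Nd Lf (-62) (0,0,-4,2) 4 Lf) (-31) (0,0,-2,1) 0 Lf)))))) (0) (0,0,0,0) 0 (Nd (Nd (Nd (Nd (Nd (Nd (Nd Lf (31) (0,0,2,-1) 0 Lf) (62) (0,0,4,-2) 4 (Nd Lf (209) (0,1,-3,1) 8 Lf)) (225) (0,1,-2,1) 0 (Nd (Nd Lf (240) (0,1,-1,0) 0 Lf) (256) (0,1,0,0) 0 Lf)) (271) (0,1,1,-1) 0 (Nd (Nd (Nd Lf (302) (0,1,3,-2) 6 Lf) (496) (0,2,-1,0) 0 Lf) (527) (0,2,1,-1) 0 (Nd (Nd Lf (558) (0,2,3,-2) 6 Lf) (589) (0,2,5,-3)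 2 Lf))) (752) (0,3,-1,0) 7 (Nd (Nd (Nd (Nd Lf (767) (0,3,0,-1) 9 Lf) (798) (0,3,2,-2) 4 (Nd Lf (829) (0,3,4,-3) 2 Lf)) (1023) (0,4,0,-1) 3 (Nd (Nd Lf (1054) (0,4,2,-2) 2 Lf) (1085) (0,4,4,-3) 1 Lf)) (3011) (1,-4,-4,3) 1 (Nd (Nd (Nd Lf (3042) (1,-4,-2,2) 2 Lf) (3267) (1,-3,-4,3) 1 Lf) (3282) (1,-3,-3,2) 3 (Nd (Nd Lf (3313) (1,-3,-1,1) 4 Lf) (3538) (1,-2,-3,2) 5 Lf)))) (3569) (1,-2,-1,1) 8 (Nd (Nd (Nd (Nd (Nd Lf (3600) (1,-2,1,0) 7 Lf) (3778) (1,-1,-4,2) 1 (Nd Lf (3809) (1,-1,-2,1) 0 Lf)) (3840) (1,-1,0,0) 0 (Nd (Nd Lf (3871) (1,-1,2,-1) 0 Lf) (4034) (1,0,-4,2) 1 Lf)) (4065) (1,0,-2,1) 0 (Nd (Nd (Nd Lf (4096) (1,0,0,0) 0 Lf) (4127) (1,0,2,-1) 0 Lf) (4305) (1,1,-3,1) 6 (Nd (Nd Lf (4336) (1,1,-1,0) 0 Lf) (4367) (1,1,1,-1) 0 Lf))) (4398) (1,1,3,-2) 5 (Nd (Nd (Nd (Nd Lf (4561) (1,2,-3,1) 4 Lf) (4592) (1,2,-1,0) 0 (Nd Lf (4623) (1,2,1,-1) 0 Lf)) (4638) (1,2,2,-2) 9 (Nd (Nd Lf (4654) (1,2,3,-2)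 5 Lf) (4669) (1,2,4,-3) 2 Lf)) (4832) (1,3,-2,0) 5 (Nd (Nd (Nd Lf (4863) (1,3,0,-1) 0 Lf) (4894) (1,3,2,-2) 7 Lf) (4925) (1,3,4,-3) 2 (Nd (Nd Lf (5088) (1,4,-2,0) 3 Lf) (5119) (1,4,0,-1) 5 Lf))))) (5134) (1,4,1,-2) 2 (Nd (Nd (Nd (Nd (Nd (Nd Lf (5150) (1,4,2,-2) 2 Lf) (5165) (1,4,3,-3) 1 (Nd Lf (7138) (2,-4,-2,2) 2 Lf)) (7378) (2,-3,-3,2) 1 (Nd (Nd Lf (7409) (2,-3,-1,1) 2 Lf) (7634) (2,-2,-3,2) 1 Lf)) (7665) (2,-2,-1,1) 4 (Nd (Nd (Nd Lf (7905) (2,-1,-2,1) 4 Lf) (7936) (2,-1,0,0) 6 Lf) (8145) (2,0,-3,1) 1 (Nd (Nd Lf (8161) (2,0,-2,1) 4 Lf) (8176) (2,0,-1,0) 8 Lf))) (8192) (2,0,0,0) 10 (Nd (Nd (Nd (Nd Lf (8207) (2,0,1,-1) 6 Lf) (8401) (2,1,-3,1) 1 (Nd Lf (8432) (2,1,-1,0) 8 Lf)) (8463) (2,1,1,-1) 7 (Nd (Nd Lf (8657) (2,2,-3,1) 1 Lf) (8672) (2,2,-2,0) 3 Lf)) (8703) (2,2,0,-1) 7 (Nd (Nd (Nd Lf (8734) (2,2,2,-2) 5 Lf) (8897) (2,3,-4,1) 1 Lf) (8928) (2,3,-2,0) 3 (Nd (Nd Lf (8959) (2,3,0,-1) 7 Lf)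 (8990) (2,3,2,-2) 5 Lf)))) (9021) (2,3,4,-3) 1 (Nd (Nd (Nd (Nd (Nd Lf (9168) (2,4,-3,0) 1 Lf) (9199) (2,4,-1,-1) 4 (Nd Lf (9230) (2,4,1,-2) 2 Lf)) (9261) (2,4,3,-3) 1 (Nd (Nd Lf (12001) (3,-1,-2,1) 1 Lf) (12272) (3,0,-1,0) 2 Lf)) (12528) (3,1,-1,0) 2 (Nd (Nd (Nd Lf (12559) (3,1,1,-1) 3 Lf) (12768) (3,2,-2,0) 1 Lf) (12799) (3,2,0,-1) 3 (Nd (Nd Lf (13024) (3,3,-2,0) 1 Lf) (13055) (3,3,0,-1) 3 Lf))) (13070) (3,3,1,-2) 3 (Nd (Nd (Nd (Nd Lf (13086) (3,3,2,-2) 1 Lf) (13295) (3,4,-1,-1) 2 Lf) (13326) (3,4,1,-2) 3 (Nd (Nd Lf (13357) (3,4,3,-3) 1 Lf) (13520) (3,5,-3,0) 1 Lf)) (16895) (4,2,0,-1) 1 (Nd (Nd (Nd Lf (17135) (4,3,-1,-1) 1 Lf) (17166) (4,3,1,-2) 1 Lf) (17391) (4,4,-1,-1) 1 (Nd (Nd Lf (17422) (4,4,1,-2) 1 Lf) (21502) (5,4,0,-2) 1 Lf)))))))"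
definition chk :: bool where
 "chk = list_all (\<lambda>(v,h). list_all (\<lambda>d. \<not> inB (step v d) \<or>
     (case lookup (step v d) T of None \<Rightarrow> False | Some h' \<Rightarrow> (h = 0 \<or> (0 < h' \<and> h' < h)))) [-1,0,1]) (entries T)"
lemma chk_true: chk by code_simp
lemma lookup0: "lookup (0,0,0,0) T = Some 0" by code_simp

fun okG :: "vec \<Rightarrow> int list \<Rightarrow> bool" where
  "okG v [] = True"
| "okG v (d#ds) = (lookup (step v d) T = Some 0 \<and> okG (step v d) ds)"
fun no4 :: "int list \<Rightarrow> bool" where
  "no4 (a#b#c#d#r) = (\<not>(a=1 \<and> b=1 \<and> c=1 \<and> d=1) \<and> no4 (b#c#d#r))"
| "no4 _ = True"

lemma W8: "list_all (\<lambda>ds. \<not>(okG (0,0,0,0) (1#ds) \<and> no4 (1#ds))) (List.n_lists 7 [0,1])" by code_simp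
lemma W7: "list_all (\<lambda>ds. okG (0,0,0,0) (1#ds) \<and> no4 (1#ds) \<longrightarrow> ds = [1,0,1,0,0,1]) (List.n_lists 6 [0,1])" by code_simp
lemma W6: "list_all (\<lambda>ds. okG (0,0,0,0) (1#ds) \<and> no4 (1#ds) \<longrightarrow> ds = [1,0,1,0,0]) (List.n_lists 5 [0,1])" by code_simp
lemma W5: "list_all (\<lambda>ds. okG (0,0,0,0) (1#ds) \<and> no4 (1#ds) \<longrightarrow> ds = [1,0,1,0]) (List.n_lists 4 [0,1])" by code_simp



lemma lookup_entries: "lookup v t = Some h \<Longrightarrow> (v,h) \<in> set (entries t)"
  by (induction t) (auto split: if_splits)

lemma cert:
  fixes ya yb yc C :: real and a b c e P1 P2 P3 Ci :: int
  assumes ev: "\<bar>of_int a + of_int b*ya + of_int c*yb + of_int e*yc\<bar> \<le> C"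
    and h1: "\<bar>ya*10000 - of_int P1\<bar> \<le> 2" and h2: "\<bar>yb*10000 - of_int P2\<bar> \<le> 2" and h3: "\<bar>yc*10000 - of_int P3\<bar> \<le> 2"
    and Ci: "C * 10000 \<le> of_int Ci"
  shows "\<bar>a*10000 + b*P1 + c*P2 + e*P3\<bar> \<le> Ci + 2*(\<bar>b\<bar>+\<bar>c\<bar>+\<bar>e\<bar>)"
proof -
  have eq: "real_of_int (a*10000 + b*P1 + c*P2 + e*P3) = 10000 * (of_int a + of_int b*ya + of_int c*yb + of_int e*yc)
      - of_int b * (ya*10000 - of_int P1) - of_int c * (yb*10000 - of_int P2) - of_int e * (yc*10000 - of_int P3)"
    by (simp add: algebra_simps)
  have t1: "\<bar>of_int b * (ya*10000 - of_int P1)\<bar> \<le> \<bar>of_int b\<bar> * 2" unfolding abs_mult by (rule mult_left_mono[OF h1]) simp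
  have t2: "\<bar>of_int c * (yb*10000 - of_int P2)\<bar> \<le> \<bar>of_int c\<bar> * 2" unfolding abs_mult by (rule mult_left_mono[OF h2]) simp
  have t3: "\<bar>of_int e * (yc*10000 - of_int P3)\<bar> \<le> \<bar>of_int e\<bar> * 2" unfolding abs_mult by (rule mult_left_mono[OF h3]) simp
  have "\<bar>real_of_int (a*10000 + b*P1 + c*P2 + e*P3)\<bar> \<le> real_of_int (Ci + 2*(\<bar>b\<bar>+\<bar>c\<bar>+\<bar>e\<bar>))"
    unfolding eq using ev t1 t2 t3 Ci by (simp add: abs_le_iff; linarith)
  thus ?thesis by linarith
qed

lemma inB_of_bounds:
  assumes h1: "\<bar>ev v B1\<bar> \<le> 21/10" and h2: "\<bar>ev v Y2\<bar> \<le> 35/10"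
    and h3: "\<bar>Re (ev v ZZ)\<bar> \<le> 46/10" and h4: "\<bar>Im (ev v ZZ)\<bar> \<le> 46/10"
  shows "inB v"
proof -
  obtain a b c e where v: "v = (a,b,c,e)" by (cases v) auto
  have re: "Re (ev v ZZ) = of_int a + of_int b * Re ZZ + of_int c * Re (ZZ^2) + of_int e * Re (ZZ^3)"
    by (simp add: v)
  have im: "Im (ev v ZZ) = of_int 0 + of_int b * Im ZZ + of_int c * Im (ZZ^2) + of_int e * Im (ZZ^3)"
    by (simp add: v)
  have A: "\<bar>a*10000 + b*19276 + c*37155 + e*71618\<bar> \<le> 21000 + 2*(\<bar>b\<bar>+\<bar>c\<bar>+\<bar>e\<bar>)"
    by (rule cert[where ya=B1 and yb="B1^2" and yc="B1^3" and C="21/10"]) (use h1 B1_approx in \<open>simp_all add: v\<close>)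
  have B: "\<bar>a*10000 + b*(-7748) + c*6003 + e*(-4651)\<bar> \<le> 35000 + 2*(\<bar>b\<bar>+\<bar>c\<bar>+\<bar>e\<bar>)"
    by (rule cert[where ya=Y2 and yb="Y2^2" and yc="Y2^3" and C="35/10"]) (use h2 Y2_approx in \<open>simp_all add: v\<close>)
  have Cc: "\<bar>a*10000 + b*(-764) + c*(-6579) + e*1516\<bar> \<le> 46000 + 2*(\<bar>b\<bar>+\<bar>c\<bar>+\<bar>e\<bar>)"
    by (rule cert[where ya="Re ZZ" and yb="Re (ZZ^2)" and yc="Re (ZZ^3)" and C="46/10"]) (use h3 ZZ_approx in \<open>simp_all add: re\<close>)
  have Dd: "\<bar>0*10000 + b*8147 + c*(-1245) + e*(-5265)\<bar> \<le> 46000 + 2*(\<bar>b\<bar>+\<bar>c\<bar>+\<bar>e\<bar>)"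
    by (rule cert[where a=0 and ya="Im ZZ" and yb="Im (ZZ^2)" and yc="Im (ZZ^3)" and C="46/10"]) (use h4 ZZ_approx in \<open>simp_all add: im\<close>)
  show ?thesis using A B Cc Dd by (simp add: v Let_def)
qed



lemma live:
  assumes inb: "\<And>n. inB (rr c n)" and cd: "\<And>n. c n \<in> {-1,0,1}"
  shows "lookup (rr c n) T = Some 0"
proof -
  have chk': "\<forall>(v,h)\<in>set (entries T). \<forall>d\<in>set [-1,0,1]. \<not> inB (step v d) \<or>
     (case lookup (step v d) T of None \<Rightarrow> False | Some h' \<Rightarrow> (h = 0 \<or> (0 < h' \<and> h' < h)))"
    using chk_true unfolding chk_def list_all_iff by blast
  have succ: "\<exists>h'. lookup (rr c (Suc n)) T = Some h' \<and> (h = 0 \<or> (0 < h' \<and> h' < h))"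
    if "lookup (rr c n) T = Some h" for n h
  proof -
    have "(rr c n, h) \<in> set (entries T)" using lookup_entries[OF that] .
    moreover have "c n \<in> set [-1,0,1]" using cd[of n] by simp
    ultimately have "\<not> inB (step (rr c n) (c n)) \<or>
     (case lookup (step (rr c n) (c n)) T of None \<Rightarrow> False | Some h' \<Rightarrow> (h = 0 \<or> (0 < h' \<and> h' < h)))"
      using chk' by blast
    moreover have "inB (step (rr c n) (c n))" using inb[of "Suc n"] by simp
    ultimately show ?thesis by (auto split: option.splits)
  qed
  have ex: "\<exists>h. lookup (rr c n) T = Some h" for n
  proof (induction n)
    case 0 show ?case using lookup0 by simp
  next
    case (Suc n) then show ?case using succ by blast
  qed
  have "\<forall>n. lookup (rr c n) T = Some h \<longrightarrow> h = 0" for h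
  proof (induction h rule: less_induct)
    case (less h)
    show ?case
    proof (intro allI impI)
      fix n assume a: "lookup (rr c n) T = Some h"
      obtain h' where h': "lookup (rr c (Suc n)) T = Some h'" "h = 0 \<or> (0 < h' \<and> h' < h)"
        using succ[OF a] by blast
      show "h = 0"
      proof (rule ccontr)
        assume "h \<noteq> 0"
        hence "0 < h'" "h' < h" using h'(2) by auto
        with less h'(1) show False by blast
      qed
    qed
  qed
  thus ?thesis using ex[of n] by blast
qed

lemma okG_rr:
  assumes "\<And>n. lookup (rr c n) T = Some 0"
  shows "okG (rr c k) (map (\<lambda>j. c (k + j)) [0..<m])"
proof (induction m arbitrary: k)
  case 0 show ?case by simp
next
  case (Suc m)
  have "map (\<lambda>j. c (k + j)) [0..<Suc m] = c k # map (\<lambda>j. c (Suc k + j)) [0..<m]"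
    by (simp add: map_upt_Suc del: upt_Suc)
  thus ?case using Suc[of "Suc k"] assms[of "Suc k"] by simp
qed

lemma no4_I:
  "(\<And>i. i + 3 < length ds \<Longrightarrow> \<not>(ds!i = 1 \<and> ds!(i+1) = 1 \<and> ds!(i+2) = 1 \<and> ds!(i+3) = 1)) \<Longrightarrow> no4 ds"
proof (induction ds rule: no4.induct)
  case (1 a b c d r)
  have "no4 (b#c#d#r)"
  proof (rule 1(1))
    fix i assume "i + 3 < length (b#c#d#r)"
    thus "\<not>((b#c#d#r)!i = 1 \<and> (b#c#d#r)!(i+1) = 1 \<and> (b#c#d#r)!(i+2) = 1 \<and> (b#c#d#r)!(i+3) = 1)"
      using 1(2)[of "Suc i"] by simp
  qed
  moreover have "\<not>(a=1 \<and> b=1 \<and> c=1 \<and> d=1)" using 1(2)[of 0] by simp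
  ultimately show ?case by simp
qed auto



lemma ZZ_root: "ZZ^4 - ZZ^3 - ZZ^2 - ZZ - 1 = 0" using factor_cplx[of ZZ] ZZ_quad by simp

lemma inB_all:
  assumes sY: "(\<lambda>j. of_int (c j) * Y2^j) sums 0" and sZ: "(\<lambda>j. of_int (c j) * ZZ^j) sums 0"
    and cb: "\<And>j. \<bar>c j\<bar> \<le> 1"
  shows "inB (rr c n)"
proof (rule inB_of_bounds)
  have "\<bar>ev (rr c n) B1\<bar> \<le> B1 / (B1 - 1)" by (rule bound_expand[OF B1(3) _ cb]) (use B1(1) in simp)
  also have "\<dots> \<le> 21/10" using B1(1) by (simp add: field_simps)
  finally show "\<bar>ev (rr c n) B1\<bar> \<le> 21/10" .
  have nY: "norm Y2 \<le> 774805/10^6" using Y2 by simp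
  have "norm (ev (rr c n) Y2) \<le> norm Y2 / (1 - norm Y2)"
    by (rule bound_contract[OF Y2(3) _ _ sY cb]) (use Y2 in auto)
  also have "\<dots> \<le> 35/10" using nY by (simp add: field_simps)
  finally show "\<bar>ev (rr c n) Y2\<bar> \<le> 35/10" by simp
  have nZ: "norm ZZ \<le> 82/100" by (rule ZZ_norm)
  have z0: "ZZ \<noteq> 0" using ww_bounds(1) by (auto simp: ZZ_def complex_eq_iff)
  have "norm (ev (rr c n) ZZ) \<le> norm ZZ / (1 - norm ZZ)"
    by (rule bound_contract[OF ZZ_root _ z0 sZ cb]) (use nZ in simp)
  also have "\<dots> \<le> 46/10" using nZ by (simp add: field_simps)
  finally have "norm (ev (rr c n) ZZ) \<le> 46/10" .
  thus "\<bar>Re (ev (rr c n) ZZ)\<bar> \<le> 46/10" "\<bar>Im (ev (rr c n) ZZ)\<bar> \<le> 46/10"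
    using abs_Re_le_cmod abs_Im_le_cmod by (blast intro: order_trans)+
qed



lemma set_m1: "{-1..3::int} = {-1,0,1,2,3}" by auto
lemma set_m2: "{-2..3::int} = {-2,-1,0,1,2,3}" by auto
lemma set_m3: "{-3..3::int} = {-3,-2,-1,0,1,2,3}" by auto

lemma pv_aset_nonneg:
  assumes "\<And>i. l \<le> i \<Longrightarrow> eps' i \<in> {0,1}"
  shows "partial_val l 3 eps' = aset {i\<in>{l..3}. eps' i = 1}"
proof -
  have g: "(\<Sum>i\<in>{i\<in>{l..3}. eps' i = 1}. x powi i) = (\<Sum>i=l..3. of_int (eps' i) * x powi i)"
    for x :: "'a::field"
  proof -
    have "(\<Sum>i\<in>{i\<in>{l..3}. eps' i = 1}. x powi i) = (\<Sum>i=l..3. if eps' i = 1 then x powi i else 0)"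
      by (rule sum.inter_filter) simp
    also have "\<dots> = (\<Sum>i=l..3. of_int (eps' i) * x powi i)"
    proof (rule sum.cong)
      fix i assume "i \<in> {l..3}"
      hence "eps' i = 0 \<or> eps' i = 1" using assms[of i] by auto
      thus "(if eps' i = 1 then x powi i else 0) = of_int (eps' i) * x powi i" by auto
    qed simp
    finally show ?thesis .
  qed
  show ?thesis unfolding partial_val_def aset_def g by simp
qed



lemma S1: "A \<subseteq> {0..3} \<Longrightarrow> A \<noteq> {0..3} \<Longrightarrow> aset A \<in> S_set"
  unfolding S_set_def Let_def by (intro UnI1) blast
lemma S2: "aset {-1,0,2} \<in> S_set" unfolding S_set_def Let_def by (intro UnI1 UnI2) simp
lemma S3: "aset {-2,-1,1} \<in> S_set" unfolding S_set_def Let_def by (intro UnI1 UnI2) simp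
lemma S4: "aset {-3,-2,0,3} \<in> S_set" unfolding S_set_def Let_def by (intro UnI1 UnI2) simp

theorem lemma3p5:
  fixes eps eps' :: "int \<Rightarrow> int" and l :: int
  assumes "Dinf 4 eps" and "Dinf l eps'"
    and "series_val 4 eps = series_val l eps'"
    and "l < 4" and "eps' l = 1"
  shows "partial_val l 3 eps' \<in> S_set \<and> l \<ge> -3
    \<and> (l = -3 \<longrightarrow> partial_val l 3 eps' = aset {-3,-2,0,3})
    \<and> (l = -2 \<longrightarrow> partial_val l 3 eps' = aset {-2,-1,1})
    \<and> (l = -1 \<longrightarrow> partial_val l 3 eps' = aset {-1,0,2})"
proof -
  have e01: "\<And>i. 4 \<le> i \<Longrightarrow> eps i \<in> {0,1}" using assms(1) unfolding Dinf_def by blast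
  have e'01: "\<And>i. l \<le> i \<Longrightarrow> eps' i \<in> {0,1}" using assms(2) unfolding Dinf_def by blast
  have e'4: "\<And>i. l \<le> i \<Longrightarrow> \<not> (eps' i = 1 \<and> eps' (i+1) = 1 \<and> eps' (i+2) = 1 \<and> eps' (i+3) = 1)"
    using assms(2) unfolding Dinf_def by blast
  define c where "c j = eps' (l + int j) - (if 4 \<le> l + int j then eps (l + int j) else 0)" for j
  have cd: "c j \<in> {-1,0,1}" for j using e01[of "l + int j"] e'01[of "l + int j"] unfolding c_def by auto
  have cb: "\<bar>c j\<bar> \<le> 1" for j using cd[of j] by auto
  have ep: "\<bar>eps' (l + int n)\<bar> \<le> 1" for n using e'01[of "l + int n"] by auto
  have e: "\<bar>eps (4 + int n)\<bar> \<le> 1" for n using e01[of "4 + int n"] by auto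
  have eq1: "(\<Sum>n. of_int (eps (4 + int n)) * Y2 powi (4 + int n)) = (\<Sum>n. of_int (eps' (l + int n)) * Y2 powi (l + int n))"
    using assms(3) unfolding series_val_def beta2_eq by simp
  have eq2: "(\<Sum>n. of_int (eps (4 + int n)) * ZZ powi (4 + int n)) = (\<Sum>n. of_int (eps' (l + int n)) * ZZ powi (l + int n))"
    using assms(3) unfolding series_val_def beta3_eq by simp
  have sY: "(\<lambda>j. of_int (c j) * Y2^j) sums 0"
    unfolding c_def by (rule series_zero[OF _ _ assms(4) ep e eq1]) (use Y2 in auto)
  have z0: "ZZ \<noteq> 0" using ww_bounds(1) by (auto simp: ZZ_def complex_eq_iff)
  have sZ: "(\<lambda>j. of_int (c j) * ZZ^j) sums 0"
    unfolding c_def by (rule series_zero[OF _ z0 assms(4) ep e eq2]) (use ZZ_norm in simp)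
  have lv: "lookup (rr c n) T = Some 0" for n
    by (rule live[OF inB_all[OF sY sZ cb] cd])
  have okm: "okG (0,0,0,0) (map c [0..<m])" for m using okG_rr[OF lv, of 0 m] by simp
  have c0: "c 0 = 1" using assms(4,5) unfolding c_def by simp
  have cl: "c j = eps' (l + int j)" if "l + int j < 4" for j using that unfolding c_def by simp
  have wd: "map c [0..<Suc k] = 1 # map (\<lambda>j. c (Suc j)) [0..<k]" for k
    by (simp add: map_upt_Suc c0 del: upt_Suc)
  have nl: "map (\<lambda>j. c (Suc j)) [0..<k] \<in> set (List.n_lists k [0,1])" if "l + int k \<le> 3" for k
  proof -
    have "c (Suc j) \<in> {0,1}" if "j < k" for j
      using cl[of "Suc j"] e'01[of "l + int (Suc j)"] that \<open>l + int k \<le> 3\<close> by auto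
    hence "set (map (\<lambda>j. c (Suc j)) [0..<k]) \<subseteq> set [0,1]" by (auto; blast)
    thus ?thesis by (simp add: set_n_lists)
  qed
  have n4: "no4 (1 # map (\<lambda>j. c (Suc j)) [0..<k])" if "l + int k \<le> 3" for k
  proof -
    have "no4 (map c [0..<Suc k])"
    proof (rule no4_I)
      fix i assume i: "i + 3 < length (map c [0..<Suc k])"
      hence i': "i + 3 \<le> k" by simp
      have "map c [0..<Suc k] ! (i + t) = eps' (l + int i + int t)" if t: "t \<le> 3" for t
      proof -
        have lt: "i + t < Suc k" using i' t by simp
        have "map c [0..<Suc k] ! (i + t) = c (i + t)" using lt by (simp del: upt_Suc)
        also have "\<dots> = eps' (l + int (i + t))" by (rule cl) (use lt \<open>l + int k \<le> 3\<close> in simp)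
        finally show ?thesis by (simp add: add.assoc)
      qed
      from this[of 0] this[of 1] this[of 2] this[of 3] e'4[of "l + int i"]
      show "\<not> (map c [0..<Suc k] ! i = 1 \<and> map c [0..<Suc k] ! (i + 1) = 1 \<and>
              map c [0..<Suc k] ! (i + 2) = 1 \<and> map c [0..<Suc k] ! (i + 3) = 1)"
        by (simp add: add.assoc)
    qed
    thus ?thesis using wd[of k] by simp
  qed
  have okk: "okG (0,0,0,0) (1 # map (\<lambda>j. c (Suc j)) [0..<k])" for k using okm[of "Suc k"] wd[of k] by simp
  have lge: "-3 \<le> l"
  proof (rule ccontr)
    assume "\<not> -3 \<le> l"
    hence h: "l + int 7 \<le> 3" by simp
    show False using W8 nl[OF h] n4[OF h] okk[of 7] unfolding list_all_iff by blast
  qed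
  have pm1: "partial_val l 3 eps' = aset {-1,0,2}" if l: "l = -1"
  proof -
    have h: "l + int 4 \<le> 3" using l by simp
    have "map (\<lambda>j. c (Suc j)) [0..<4] = [1,0,1,0]" using W5 nl[OF h] n4[OF h] okk[of 4] unfolding list_all_iff by blast
    hence "c 1 = 1" "c 2 = 0" "c 3 = 1" "c 4 = 0" by (simp_all add: upt_rec eval_nat_numeral)
    hence v: "eps' 0 = 1" "eps' 1 = 0" "eps' 2 = 1" "eps' 3 = 0" using cl[of 1] cl[of 2] cl[of 3] cl[of 4] l by simp_all
    show ?thesis using v assms(5) unfolding l partial_val_def aset_def set_m1 by simp
  qed
  have pm2: "partial_val l 3 eps' = aset {-2,-1,1}" if l: "l = -2"
  proof -
    have h: "l + int 5 \<le> 3" using l by simp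
    have "map (\<lambda>j. c (Suc j)) [0..<5] = [1,0,1,0,0]" using W6 nl[OF h] n4[OF h] okk[of 5] unfolding list_all_iff by blast
    hence "c 1 = 1" "c 2 = 0" "c 3 = 1" "c 4 = 0" "c 5 = 0" by (simp_all add: upt_rec eval_nat_numeral)
    hence v: "eps' (-1) = 1" "eps' 0 = 0" "eps' 1 = 1" "eps' 2 = 0" "eps' 3 = 0"
      using cl[of 1] cl[of 2] cl[of 3] cl[of 4] cl[of 5] l by simp_all
    show ?thesis using v assms(5) unfolding l partial_val_def aset_def set_m2 by simp
  qed
  have pm3: "partial_val l 3 eps' = aset {-3,-2,0,3}" if l: "l = -3"
  proof -
    have h: "l + int 6 \<le> 3" using l by simp
    have "map (\<lambda>j. c (Suc j)) [0..<6] = [1,0,1,0,0,1]" using W7 nl[OF h] n4[OF h] okk[of 6] unfolding list_all_iff by blast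
    hence "c 1 = 1" "c 2 = 0" "c 3 = 1" "c 4 = 0" "c 5 = 0" "c 6 = 1" by (simp_all add: upt_rec eval_nat_numeral)
    hence v: "eps' (-2) = 1" "eps' (-1) = 0" "eps' 0 = 1" "eps' 1 = 0" "eps' 2 = 0" "eps' 3 = 1"
      using cl[of 1] cl[of 2] cl[of 3] cl[of 4] cl[of 5] cl[of 6] l by simp_all
    show ?thesis using v assms(5) unfolding l partial_val_def aset_def set_m3 by simp
  qed
  have inS: "partial_val l 3 eps' \<in> S_set"
  proof (cases "0 \<le> l")
    case True
    define A where "A = {i\<in>{l..3}. eps' i = 1}"
    have pv: "partial_val l 3 eps' = aset A" unfolding A_def by (rule pv_aset_nonneg[OF e'01])
    have sub: "A \<subseteq> {0..3}" using True unfolding A_def by auto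
    have ne: "A \<noteq> {0..3}"
    proof
      assume a: "A = {0..3}"
      have "(0::int) \<in> {0..3}" "(1::int) \<in> {0..3}" "(2::int) \<in> {0..3}" "(3::int) \<in> {0..3}" by simp_all
      hence "0 \<in> A" "1 \<in> A" "2 \<in> A" "3 \<in> A" unfolding a by blast+
      hence "l \<le> 0" "eps' 0 = 1" "eps' 1 = 1" "eps' 2 = 1" "eps' 3 = 1" unfolding A_def by auto
      thus False using e'4[of 0] by simp
    qed
    show ?thesis unfolding pv by (rule S1[OF sub ne])
  next
    case False
    hence "l = -1 \<or> l = -2 \<or> l = -3" using lge by auto
    moreover have "l = -1 \<Longrightarrow> ?thesis" using pm1 S2 by simp
    moreover have "l = -2 \<Longrightarrow> ?thesis" using pm2 S3 by simp
    moreover have "l = -3 \<Longrightarrow> ?thesis" using pm3 S4 by simp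
    ultimately show ?thesis by blast
  qed
  show ?thesis using inS lge pm1 pm2 pm3 by blast
qed


end
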